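(* Let $H$ be a compactly generated locally compact group such that for every pair $(X,\alpha),(Y,\beta)$ in $\mathrm{Geom}(H)$ the orbital map $X\to Y$ is a rough similarity. Then: (1) if $K$ is a compact normal subgroup of $H$, then for every pair $(X,\alpha),(Y,\beta)$ in $\mathrm{Geom}(H/K)$ the orbital map $X\to Y$ is a rough similarity; (2) if $G$ is a locally compact group receiving an injective continuous homomorphism from $H$ with closed cocompact image, then for every pair $(X,\alpha),(Y,\beta)$ in $\mathrm{Geom}(G)$ the orbital map $X\to Y$ is a rough similarity.
   Context: For a locally compact compactly generated group $G$, $\mathrm{Geom}(G)$ is the collection of pairs $(X,\alpha)$ with $X$ a proper geodesic metric space and $\alpha\colon G\to\mathrm{Isom}(X)$ a continuous, proper, cocompact action. For $(X,\alpha),(Y,\beta)\in\mathrm{Geom}(G)$ and points $o_X\in X$, $o_Y\in Y$, the orbital map is the map $\alpha(\gamma)o_X\mapsto\beta(\gamma)o_Y$ ($\gamma\in G$), extended to a quasiisometry $X\to Y$ and considered up to bounded distance. A map $\phi$ is a rough similarity if there are $\lambda>0$, $c\ge0$ with $\lambda d(x,x')-c\le d(\phi x,\phi x')\le\lambda d(x,x')+c$ for all $x,x'$. *)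

theory Defs
  imports "HOL-Analysis.Analysis" "HOL-Algebra.Coset" "HOL-Algebra.Generated_Groups"
begin

definition topological_group :: "('g,'m) monoid_scheme \<Rightarrow> 'g topology \<Rightarrow> bool" where
  "topological_group G T \<longleftrightarrow> group G \<and> topspace T = carrier G \<and>
     continuous_map (prod_topology T T) T (\<lambda>(x,y). x \<otimes>\<^bsub>G\<^esub> y) \<and>
     continuous_map T T (\<lambda>x. inv\<^bsub>G\<^esub> x)"

definition lc_group :: "('g,'m) monoid_scheme \<Rightarrow> 'g topology \<Rightarrow> bool" where
  "lc_group G T \<longleftrightarrow> topological_group G T \<and> Hausdorff_space T \<and> locally_compact_space T"

definition compactly_generated :: "('g,'m) monoid_scheme \<Rightarrow> 'g topology \<Rightarrow> bool" where
  "compactly_generated G T \<longleftrightarrow>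
     (\<exists>S. S \<subseteq> carrier G \<and> compactin T S \<and> generate G S = carrier G)"

text \<open>For a normal subgroup this is the
  topology of the quotient group \<open>G Mod K\<close>.\<close>
definition coset_topology :: "('g,'m) monoid_scheme \<Rightarrow> 'g topology \<Rightarrow> 'g set \<Rightarrow> 'g set topology" where
  "coset_topology G T K = topology (\<lambda>U. U \<subseteq> rcosets\<^bsub>G\<^esub> K \<and> openin T (\<Union>U))"

definition proper_metric :: "'x set \<Rightarrow> ('x \<Rightarrow> 'x \<Rightarrow> real) \<Rightarrow> bool" where
  "proper_metric M d \<longleftrightarrow>
     (\<forall>x\<in>M. \<forall>r. compactin (Metric_space.mtopology M d) (Metric_space.mcball M d x r))"

definition geodesic_metric :: "'x set \<Rightarrow> ('x \<Rightarrow> 'x \<Rightarrow> real) \<Rightarrow> bool" where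
  "geodesic_metric M d \<longleftrightarrow>
     (\<forall>x\<in>M. \<forall>y\<in>M. \<exists>\<gamma>. \<gamma> \<in> {0..d x y} \<rightarrow> M \<and> \<gamma> 0 = x \<and> \<gamma> (d x y) = y \<and>
        (\<forall>s\<in>{0..d x y}. \<forall>t\<in>{0..d x y}. d (\<gamma> s) (\<gamma> t) = \<bar>s - t\<bar>))"

definition isometry_of :: "'x set \<Rightarrow> ('x \<Rightarrow> 'x \<Rightarrow> real) \<Rightarrow> ('x \<Rightarrow> 'x) \<Rightarrow> bool" where
  "isometry_of M d f \<longleftrightarrow> bij_betw f M M \<and> (\<forall>x\<in>M. \<forall>y\<in>M. d (f x) (f y) = d x y)"

text \<open>\<open>\<alpha>\<close> is a homomorphism \<open>G \<rightarrow> Isom(M,d)\<close> (maps compared on \<open>M\<close> only).\<close>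
definition isometric_action ::
  "('g,'m) monoid_scheme \<Rightarrow> 'x set \<Rightarrow> ('x \<Rightarrow> 'x \<Rightarrow> real) \<Rightarrow> ('g \<Rightarrow> 'x \<Rightarrow> 'x) \<Rightarrow> bool" where
  "isometric_action G M d \<alpha> \<longleftrightarrow>
     (\<forall>g\<in>carrier G. isometry_of M d (\<alpha> g)) \<and>
     (\<forall>x\<in>M. \<alpha> \<one>\<^bsub>G\<^esub> x = x) \<and>
     (\<forall>g\<in>carrier G. \<forall>h\<in>carrier G. \<forall>x\<in>M. \<alpha> (g \<otimes>\<^bsub>G\<^esub> h) x = \<alpha> g (\<alpha> h x))"

text \<open>The set \<open>Geom(G)\<close>: \<open>(M,d)\<close> proper geodesic metric space, \<open>\<alpha>\<close> a continuous, proper,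
  cocompact isometric action.\<close>
definition geom_action ::
  "('g,'m) monoid_scheme \<Rightarrow> 'g topology \<Rightarrow> 'x set \<Rightarrow> ('x \<Rightarrow> 'x \<Rightarrow> real) \<Rightarrow> ('g \<Rightarrow> 'x \<Rightarrow> 'x) \<Rightarrow> bool" where
  "geom_action G T M d \<alpha> \<longleftrightarrow>
     Metric_space M d \<and> proper_metric M d \<and> geodesic_metric M d \<and>
     isometric_action G M d \<alpha> \<and>
     continuous_map (prod_topology T (Metric_space.mtopology M d)) (Metric_space.mtopology M d)
        (\<lambda>(g,x). \<alpha> g x) \<and>
     (\<forall>C. C \<subseteq> M \<and> compactin (Metric_space.mtopology M d) C \<longrightarrow>
        compactin T (T closure_of {g\<in>carrier G. \<alpha> g ` C \<inter> C \<noteq> {}})) \<and>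
     (\<exists>C. C \<subseteq> M \<and> compactin (Metric_space.mtopology M d) C \<and> (\<Union>g\<in>carrier G. \<alpha> g ` C) = M)"

definition quasi_isometry ::
  "'x set \<Rightarrow> ('x \<Rightarrow> 'x \<Rightarrow> real) \<Rightarrow> 'y set \<Rightarrow> ('y \<Rightarrow> 'y \<Rightarrow> real) \<Rightarrow> ('x \<Rightarrow> 'y) \<Rightarrow> bool" where
  "quasi_isometry M d N e \<phi> \<longleftrightarrow> \<phi> \<in> M \<rightarrow> N \<and>
     (\<exists>L c. L \<ge> 1 \<and> c \<ge> 0 \<and>
        (\<forall>x\<in>M. \<forall>x'\<in>M. d x x' / L - c \<le> e (\<phi> x) (\<phi> x') \<and> e (\<phi> x) (\<phi> x') \<le> L * d x x' + c) \<and>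
        (\<forall>y\<in>N. \<exists>x\<in>M. e (\<phi> x) y \<le> c))"

definition rough_similarity ::
  "'x set \<Rightarrow> ('x \<Rightarrow> 'x \<Rightarrow> real) \<Rightarrow> 'y set \<Rightarrow> ('y \<Rightarrow> 'y \<Rightarrow> real) \<Rightarrow> ('x \<Rightarrow> 'y) \<Rightarrow> bool" where
  "rough_similarity M d N e \<phi> \<longleftrightarrow>
     (\<exists>lam c. lam > 0 \<and> c \<ge> 0 \<and>
        (\<forall>x\<in>M. \<forall>x'\<in>M. lam * d x x' - c \<le> e (\<phi> x) (\<phi> x') \<and> e (\<phi> x) (\<phi> x') \<le> lam * d x x' + c))"

text \<open>\<open>\<phi>\<close> is (a representative of) the orbital map \<open>\<alpha>(g) o \<mapsto> \<beta>(g) o'\<close>: a quasi-isometry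
  \<open>M \<rightarrow> N\<close> at bounded distance from it on the orbit.\<close>
definition orbital_map ::
  "('g,'m) monoid_scheme \<Rightarrow> 'x set \<Rightarrow> ('x \<Rightarrow> 'x \<Rightarrow> real) \<Rightarrow> ('g \<Rightarrow> 'x \<Rightarrow> 'x) \<Rightarrow> 'x \<Rightarrow>
     'y set \<Rightarrow> ('y \<Rightarrow> 'y \<Rightarrow> real) \<Rightarrow> ('g \<Rightarrow> 'y \<Rightarrow> 'y) \<Rightarrow> 'y \<Rightarrow> ('x \<Rightarrow> 'y) \<Rightarrow> bool" where
  "orbital_map G M d \<alpha> p N e \<beta> p' \<phi> \<longleftrightarrow> quasi_isometry M d N e \<phi> \<and>
     (\<exists>C. \<forall>g\<in>carrier G. e (\<phi> (\<alpha> g p)) (\<beta> g p') \<le> C)"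

definition orbital_maps_rough_similar ::
  "('g,'m) monoid_scheme \<Rightarrow> 'g topology \<Rightarrow> 'x itself \<Rightarrow> 'y itself \<Rightarrow> bool" where
  "orbital_maps_rough_similar G T (_::'x itself) (_::'y itself) \<longleftrightarrow>
     (\<forall>(M::'x set) d \<alpha> (N::'y set) e \<beta>.
        geom_action G T M d \<alpha> \<and> geom_action G T N e \<beta> \<longrightarrow>
        (\<forall>p\<in>M. \<forall>p'\<in>N. \<forall>\<phi>. orbital_map G M d \<alpha> p N e \<beta> p' \<phi> \<longrightarrow> rough_similarity M d N e \<phi>))"

end

theory Submission
  imports Defs
begin


lemma tg_group: "topological_group G T \<Longrightarrow> group G"
  by (simp add: topological_group_def)

lemma tg_top: "topological_group G T \<Longrightarrow> topspace T = carrier G"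
  by (simp add: topological_group_def)

lemma tg_mult: "topological_group G T \<Longrightarrow>
   continuous_map (prod_topology T T) T (\<lambda>(x,y). x \<otimes>\<^bsub>G\<^esub> y)"
  by (simp add: topological_group_def)

lemma tg_lmult:
  assumes "topological_group G T" "g \<in> carrier G"
  shows "continuous_map T T (\<lambda>x. g \<otimes>\<^bsub>G\<^esub> x)"
proof -
  have "continuous_map T (prod_topology T T) (\<lambda>x. (g, x))"
    using assms by (simp add: continuous_map_pairwise o_def tg_top)
  from continuous_map_compose[OF this tg_mult[OF assms(1)]]
  show ?thesis by (simp add: o_def)
qed

lemma tg_lmult_open:
  fixes G :: "('g,'m) monoid_scheme" (structure)
  assumes tg: "topological_group G T" and g: "g \<in> carrier G" and U: "openin T U"
  shows "openin T ((\<lambda>x. g \<otimes>\<^bsub>G\<^esub> x) ` U)"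
proof -
  interpret group G using tg by (rule tg_group)
  have Usub: "U \<subseteq> carrier G" using U openin_subset tg_top[OF tg] by blast
  have "(\<lambda>x. g \<otimes> x) ` U = {x \<in> topspace T. inv g \<otimes> x \<in> U}"
  proof (intro equalityI subsetI)
    fix y assume "y \<in> (\<lambda>x. g \<otimes> x) ` U"
    then obtain x where x: "x \<in> U" "y = g \<otimes> x" by blast
    then have "x \<in> carrier G" using Usub by blast
    then show "y \<in> {x \<in> topspace T. inv g \<otimes> x \<in> U}"
      using x g by (simp add: tg_top[OF tg] m_assoc[symmetric])
  next
    fix y assume "y \<in> {x \<in> topspace T. inv g \<otimes> x \<in> U}"
    then have y: "y \<in> carrier G" "inv g \<otimes> y \<in> U" using tg_top[OF tg] by auto
    then have "y = g \<otimes> (inv g \<otimes> y)" using g by (simp add: m_assoc[symmetric])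
    then show "y \<in> (\<lambda>x. g \<otimes> x) ` U" using y by blast
  qed
  moreover have "openin T {x \<in> topspace T. inv g \<otimes> x \<in> U}"
    by (rule openin_continuous_map_preimage[OF tg_lmult[OF tg] U]) (use g in simp)
  ultimately show ?thesis by simp
qed

lemma tg_compact_mult:
  assumes tg: "topological_group G T" and "compactin T A" "compactin T B"
  shows "compactin T ((\<lambda>(x,y). x \<otimes>\<^bsub>G\<^esub> y) ` (A \<times> B))"
  by (rule image_compactin[OF _ tg_mult[OF tg]]) (use assms in \<open>simp add: compactin_Times\<close>)

lemma tg_compact_lmult:
  assumes tg: "topological_group G T" and g: "g \<in> carrier G" and "compactin T A"
  shows "compactin T ((\<lambda>x. g \<otimes>\<^bsub>G\<^esub> x) ` A)"
  by (rule image_compactin[OF assms(3) tg_lmult[OF tg g]])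

lemma coset_istopology:
  fixes G :: "('g,'m) monoid_scheme" (structure)
  assumes "group G" "subgroup K G"
  shows "istopology (\<lambda>U. U \<subseteq> rcosets\<^bsub>G\<^esub> K \<and> openin T (\<Union>U))"
proof -
  interpret group G by fact
  have disj: "pairwise disjnt (rcosets K)" by (rule rcos_disjoint[OF assms(2)])
  have 1: "S \<inter> U \<subseteq> rcosets K \<and> openin T (\<Union>(S \<inter> U))"
    if S: "S \<subseteq> rcosets K \<and> openin T (\<Union>S)" and U: "U \<subseteq> rcosets K \<and> openin T (\<Union>U)" for S U
  proof -
    have "\<Union>(S \<inter> U) = \<Union>S \<inter> \<Union>U"
    proof
      show "\<Union>S \<inter> \<Union>U \<subseteq> \<Union>(S \<inter> U)"
      proof
        fix x assume "x \<in> \<Union>S \<inter> \<Union>U"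
        then obtain A B where "x \<in> A" "A \<in> S" "x \<in> B" "B \<in> U" by blast
        moreover have "A = B"
          using disj S U calculation unfolding pairwise_def disjnt_def by blast
        ultimately show "x \<in> \<Union>(S \<inter> U)" by blast
      qed
    qed blast
    then show ?thesis using S U by auto
  qed
  have 2: "\<Union>\<K> \<subseteq> rcosets K \<and> openin T (\<Union>(\<Union>\<K>))"
    if "\<forall>S\<in>\<K>. S \<subseteq> rcosets K \<and> openin T (\<Union>S)" for \<K>
  proof -
    have "\<Union>(\<Union>\<K>) = \<Union>((\<lambda>S. \<Union>S) ` \<K>)" by blast
    moreover have "openin T (\<Union>((\<lambda>S. \<Union>S) ` \<K>))" using that by (intro openin_Union) auto
    ultimately show ?thesis using that by auto
  qed
  show ?thesis unfolding istopology_def using 1 2 by simp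
qed

lemma openin_coset_topology:
  assumes "group G" "subgroup K G"
  shows "openin (coset_topology G T K) U \<longleftrightarrow> U \<subseteq> rcosets\<^bsub>G\<^esub> K \<and> openin T (\<Union>U)"
  unfolding coset_topology_def using coset_istopology[OF assms] by simp

lemma Union_rcosets:
  fixes G :: "('g,'m) monoid_scheme" (structure)
  assumes "group G" "subgroup K G"
  shows "\<Union>(rcosets\<^bsub>G\<^esub> K) = carrier G"
proof -
  interpret group G by fact
  show ?thesis
    using rcos_self[OF _ assms(2)] subgroup.rcosets_carrier[OF assms(2) assms(1)]
    by (auto simp: RCOSETS_def)
qed

lemma topspace_coset_topology:
  assumes tg: "topological_group G T" "subgroup K G"
  shows "topspace (coset_topology G T K) = rcosets\<^bsub>G\<^esub> K"
proof -
  have g: "group G" using tg_group[OF tg(1)] .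
  have "openin (coset_topology G T K) (rcosets\<^bsub>G\<^esub> K)"
    using openin_coset_topology[OF g assms(2)] Union_rcosets[OF g assms(2)] tg_top[OF tg(1)]
    by (metis openin_topspace order_refl)
  then have "rcosets\<^bsub>G\<^esub> K \<subseteq> topspace (coset_topology G T K)" by (rule openin_subset)
  moreover have "topspace (coset_topology G T K) \<subseteq> rcosets\<^bsub>G\<^esub> K"
    using openin_coset_topology[OF g assms(2)] openin_topspace by blast
  ultimately show ?thesis by blast
qed

lemma coset_proj_continuous:
  fixes G :: "('g,'m) monoid_scheme" (structure)
  assumes tg: "topological_group G T" "subgroup K G"
  shows "continuous_map T (coset_topology G T K) (\<lambda>h. K #>\<^bsub>G\<^esub> h)"
proof -
  interpret group G using tg_group[OF tg(1)] .
  have g: "group G" by (rule is_group)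
  have A: "K #> x \<in> topspace (coset_topology G T K)" if "x \<in> topspace T" for x
      using that topspace_coset_topology[OF tg] tg_top[OF tg(1)] rcosetsI subgroup.subset[OF tg(2)] by auto
  have B: "openin T {x \<in> topspace T. K #> x \<in> U}" if U: "openin (coset_topology G T K) U" for U
  proof -
    from U have U': "U \<subseteq> rcosets K" "openin T (\<Union>U)"
      using openin_coset_topology[OF g tg(2)] by auto
    have "{x \<in> topspace T. K #> x \<in> U} = \<Union>U"
    proof (intro equalityI subsetI)
      fix x assume "x \<in> {x \<in> topspace T. K #> x \<in> U}"
      then show "x \<in> \<Union>U" using rcos_self[OF _ tg(2)] tg_top[OF tg(1)] by auto
    next
      fix x assume "x \<in> \<Union>U"
      then obtain A where A: "x \<in> A" "A \<in> U" by blast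
      then obtain a where a: "a \<in> carrier G" "A = K #> a" using U' by (auto simp: RCOSETS_def)
      have "K #> a = K #> x" using repr_independence[OF _ a(1) tg(2)] A a by simp
      moreover have "x \<in> carrier G" using A a subgroup.elemrcos_carrier[OF tg(2) g] by blast
      ultimately show "x \<in> {x \<in> topspace T. K #> x \<in> U}" using A a tg_top[OF tg(1)] by auto
    qed
    then show "openin T {x \<in> topspace T. K #> x \<in> U}" using U' by simp
  qed
  show ?thesis unfolding continuous_map_def using A B by simp
qed

lemma coset_image_open:
  fixes G :: "('g,'m) monoid_scheme" (structure)
  assumes tg: "topological_group G T" "subgroup K G" and U: "openin T U"
  shows "openin (coset_topology G T K) ((\<lambda>u. K #>\<^bsub>G\<^esub> u) ` U)"
proof -
  interpret group G using tg_group[OF tg(1)] .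
  have g: "group G" by (rule is_group)
  have Usub: "U \<subseteq> carrier G" using U openin_subset tg_top[OF tg(1)] by blast
  have "\<Union>((\<lambda>u. K #> u) ` U) = (\<Union>k\<in>K. (\<lambda>x. k \<otimes> x) ` U)"
    by (auto simp: r_coset_def)
  moreover have "openin T (\<Union>k\<in>K. (\<lambda>x. k \<otimes> x) ` U)"
    using tg_lmult_open[OF tg(1) _ U] subgroup.subset[OF tg(2)] by blast
  moreover have "(\<lambda>u. K #> u) ` U \<subseteq> rcosets K"
    using Usub rcosetsI subgroup.subset[OF tg(2)] by blast
  ultimately show ?thesis using openin_coset_topology[OF g tg(2)] by simp
qed




lemma coset_compact_cover:
  fixes G :: "('g,'m) monoid_scheme" (structure)
  assumes tg: "topological_group G T" and lc: "locally_compact_space T"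
    and sub: "subgroup K G" and Q: "compactin (coset_topology G T K) Q"
  shows "\<exists>D. compactin T D \<and> (\<forall>h\<in>carrier G. K #> h \<in> Q \<longrightarrow> (\<exists>k\<in>K. \<exists>d\<in>D. h = k \<otimes> d))"
proof -
  interpret group G using tg_group[OF tg] .
  have g: "group G" by (rule is_group)
  obtain U C where UC: "\<And>x. x \<in> topspace T \<Longrightarrow> openin T (U x) \<and> compactin T (C x) \<and> x \<in> U x \<and> U x \<subseteq> C x"
    using lc unfolding locally_compact_space_def by metis
  define \<U> where "\<U> = (\<lambda>x. (\<lambda>u. K #> u) ` U x) ` carrier G"
  have op: "\<forall>B\<in>\<U>. openin (coset_topology G T K) B"
    unfolding \<U>_def using coset_image_open[OF tg sub] UC tg_top[OF tg] by auto
  have cov: "Q \<subseteq> \<Union>\<U>"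
  proof
    fix q assume "q \<in> Q"
    then have "q \<in> rcosets K"
      using compactin_subset_topspace[OF Q] topspace_coset_topology[OF tg sub] by blast
    then obtain a where a: "a \<in> carrier G" "q = K #> a" by (auto simp: RCOSETS_def)
    then have "q \<in> (\<lambda>u. K #> u) ` U a" using UC tg_top[OF tg] by auto
    then show "q \<in> \<Union>\<U>" using a unfolding \<U>_def by blast
  qed
  obtain \<F> where F: "finite \<F>" "\<F> \<subseteq> \<U>" "Q \<subseteq> \<Union>\<F>"
    using Q op cov unfolding compactin_def by meson
  then obtain X where X: "X \<subseteq> carrier G" "finite X" "\<F> = (\<lambda>x. (\<lambda>u. K #> u) ` U x) ` X"
    unfolding \<U>_def by (meson finite_subset_image)
  define D where "D = \<Union>(C ` X)"
  have "compactin T D"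
    unfolding D_def using X UC tg_top[OF tg] by (intro compactin_Union) auto
  moreover have "\<exists>k\<in>K. \<exists>d\<in>D. h = k \<otimes> d" if h: "h \<in> carrier G" "K #> h \<in> Q" for h
  proof -
    obtain x u where xu: "x \<in> X" "u \<in> U x" "K #> h = K #> u" using F X h by auto
    have ucar: "u \<in> carrier G" using xu X UC tg_top[OF tg] openin_subset by blast
    have "h \<in> K #> u" using xu(3) rcos_self[OF h(1) sub] by simp
    then obtain k where k: "k \<in> K" "h = k \<otimes> u" by (auto simp: r_coset_def)
    moreover have "u \<in> D" using xu X UC tg_top[OF tg] unfolding D_def by blast
    ultimately show ?thesis by blast
  qed
  ultimately show ?thesis by blast
qed

lemma geom_pullback:
  assumes ga: "geom_action G TG M d \<alpha>"
    and gH: "group H" and gG: "group G"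
    and hom: "\<pi> \<in> hom H G" and cont: "continuous_map TH TG \<pi>"
    and topG: "topspace TG = carrier G"
    and hausH: "Hausdorff_space TH"
    and prp: "\<And>Q. compactin TG Q \<Longrightarrow> \<exists>E. compactin TH E \<and> {h \<in> carrier H. \<pi> h \<in> Q} \<subseteq> E"
    and cocpt: "\<exists>D. compactin TG D \<and> (\<forall>g\<in>carrier G. \<exists>h\<in>carrier H. \<exists>dd\<in>D. g = \<pi> h \<otimes>\<^bsub>G\<^esub> dd)"
  shows "geom_action H TH M d (\<lambda>h. \<alpha> (\<pi> h))"
proof -
  have MS: "Metric_space M d" and pr: "proper_metric M d" and geo: "geodesic_metric M d"
    and ia: "isometric_action G M d \<alpha>"
    and ct: "continuous_map (prod_topology TG (Metric_space.mtopology M d)) (Metric_space.mtopology M d) (\<lambda>(g,x). \<alpha> g x)"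
    and pp: "\<forall>C. C \<subseteq> M \<and> compactin (Metric_space.mtopology M d) C \<longrightarrow>
        compactin TG (TG closure_of {g\<in>carrier G. \<alpha> g ` C \<inter> C \<noteq> {}})"
    and cc: "\<exists>C. C \<subseteq> M \<and> compactin (Metric_space.mtopology M d) C \<and> (\<Union>g\<in>carrier G. \<alpha> g ` C) = M"
    using ga unfolding geom_action_def by auto
  interpret Metric_space M d by (rule MS)
  have pic: "\<pi> h \<in> carrier G" if "h \<in> carrier H" for h
    using hom that by (auto simp: hom_def)
  have isoG: "\<And>g. g \<in> carrier G \<Longrightarrow> isometry_of M d (\<alpha> g)"
    and one: "\<forall>x\<in>M. \<alpha> \<one>\<^bsub>G\<^esub> x = x"
    and comp: "\<forall>g\<in>carrier G. \<forall>h\<in>carrier G. \<forall>x\<in>M. \<alpha> (g \<otimes>\<^bsub>G\<^esub> h) x = \<alpha> g (\<alpha> h x)"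
    using ia unfolding isometric_action_def by auto
  have inM: "\<alpha> g x \<in> M" if "g \<in> carrier G" "x \<in> M" for g x
    using isoG[OF that(1)] that(2) unfolding isometry_of_def bij_betw_def by auto
  have ia': "isometric_action H M d (\<lambda>h. \<alpha> (\<pi> h))"
    unfolding isometric_action_def
    using isoG pic one comp hom_one[OF hom gH gG] hom_mult[OF hom] by auto
  have ct': "continuous_map (prod_topology TH mtopology) mtopology (\<lambda>(h,x). \<alpha> (\<pi> h) x)"
  proof -
    have "continuous_map (prod_topology TH mtopology) (prod_topology TG mtopology) (\<lambda>(h,x). (\<pi> h, id x))"
      using continuous_map_prod_top cont by (metis continuous_map_id)
    from continuous_map_compose[OF this ct] show ?thesis
      by (simp add: o_def case_prod_beta')
  qed
  have pp': "compactin TH (TH closure_of {h\<in>carrier H. \<alpha> (\<pi> h) ` C \<inter> C \<noteq> {}})"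
    if C: "C \<subseteq> M" "compactin mtopology C" for C
  proof -
    define S where "S = {g\<in>carrier G. \<alpha> g ` C \<inter> C \<noteq> {}}"
    have Q: "compactin TG (TG closure_of S)" using pp C unfolding S_def by auto
    obtain E where E: "compactin TH E" "{h \<in> carrier H. \<pi> h \<in> TG closure_of S} \<subseteq> E"
      using prp[OF Q] by blast
    have "S \<subseteq> TG closure_of S" by (rule closure_of_subset) (auto simp: S_def topG)
    then have "{h\<in>carrier H. \<alpha> (\<pi> h) ` C \<inter> C \<noteq> {}} \<subseteq> E"
      using E(2) pic unfolding S_def by blast
    then have "TH closure_of {h\<in>carrier H. \<alpha> (\<pi> h) ` C \<inter> C \<noteq> {}} \<subseteq> E"
      by (rule closure_of_minimal) (rule compactin_imp_closedin[OF hausH E(1)])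
    then show ?thesis using closed_compactin[OF E(1)] by simp
  qed
  have cc': "\<exists>C. C \<subseteq> M \<and> compactin mtopology C \<and> (\<Union>h\<in>carrier H. \<alpha> (\<pi> h) ` C) = M"
  proof -
    obtain C where C: "C \<subseteq> M" "compactin mtopology C" "(\<Union>g\<in>carrier G. \<alpha> g ` C) = M"
      using cc by blast
    obtain D where D: "compactin TG D" "\<forall>g\<in>carrier G. \<exists>h\<in>carrier H. \<exists>dd\<in>D. g = \<pi> h \<otimes>\<^bsub>G\<^esub> dd"
      using cocpt by blast
    define C' where "C' = (\<lambda>(g,x). \<alpha> g x) ` (D \<times> C)"
    have "compactin mtopology C'"
      unfolding C'_def by (rule image_compactin[OF _ ct]) (use D C in \<open>simp add: compactin_Times\<close>)
    moreover have Dsub: "D \<subseteq> carrier G" using compactin_subset_topspace[OF D(1)] topG by simp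
    have "C' \<subseteq> M" unfolding C'_def using Dsub C inM by auto
    moreover have "(\<Union>h\<in>carrier H. \<alpha> (\<pi> h) ` C') = M"
    proof
      show "(\<Union>h\<in>carrier H. \<alpha> (\<pi> h) ` C') \<subseteq> M" using \<open>C' \<subseteq> M\<close> inM pic by blast
      show "M \<subseteq> (\<Union>h\<in>carrier H. \<alpha> (\<pi> h) ` C')"
      proof
        fix y assume "y \<in> M"
        then obtain g x where gx: "g \<in> carrier G" "x \<in> C" "y = \<alpha> g x" using C(3) by blast
        then obtain h dd where hd: "h \<in> carrier H" "dd \<in> D" "g = \<pi> h \<otimes>\<^bsub>G\<^esub> dd" using D(2) by blast
        have "y = \<alpha> (\<pi> h) (\<alpha> dd x)" using comp gx hd pic[OF hd(1)] Dsub C(1) by blast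
        moreover have "\<alpha> dd x \<in> C'" unfolding C'_def using hd gx by auto
        ultimately show "y \<in> (\<Union>h\<in>carrier H. \<alpha> (\<pi> h) ` C')" using hd by blast
      qed
    qed
    ultimately show ?thesis by blast
  qed
  show ?thesis unfolding geom_action_def
    using MS pr geo ia' ct' pp' cc' by blast
qed

lemma orbital_pullback:
  assumes "orbital_map G M d \<alpha> p N e \<beta> p' \<phi>" "\<pi> \<in> carrier H \<rightarrow> carrier G"
  shows "orbital_map H M d (\<lambda>h. \<alpha> (\<pi> h)) p N e (\<lambda>h. \<beta> (\<pi> h)) p' \<phi>"
  using assms unfolding orbital_map_def by (meson Pi_iff)

lemma reduce:
  fixes H :: "('h,'a) monoid_scheme" and G :: "('g,'b) monoid_scheme"
  assumes hyp: "orbital_maps_rough_similar H TH TYPE('x) TYPE('y)"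
    and gH: "group H" and gG: "group G"
    and hom: "\<pi> \<in> hom H G" and cont: "continuous_map TH TG \<pi>"
    and topG: "topspace TG = carrier G"
    and hausH: "Hausdorff_space TH"
    and prp: "\<And>Q. compactin TG Q \<Longrightarrow> \<exists>E. compactin TH E \<and> {h \<in> carrier H. \<pi> h \<in> Q} \<subseteq> E"
    and cocpt: "\<exists>D. compactin TG D \<and> (\<forall>g\<in>carrier G. \<exists>h\<in>carrier H. \<exists>dd\<in>D. g = \<pi> h \<otimes>\<^bsub>G\<^esub> dd)"
  shows "orbital_maps_rough_similar G TG TYPE('x) TYPE('y)"
  unfolding orbital_maps_rough_similar_def
proof (intro allI impI ballI conjI)
  fix M :: "'x set" and d \<alpha> and N :: "'y set" and e \<beta> p p' \<phi>
  assume ga: "geom_action G TG M d \<alpha> \<and> geom_action G TG N e \<beta>"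
    and p: "p \<in> M" "p' \<in> N" and om: "orbital_map G M d \<alpha> p N e \<beta> p' \<phi>"
  have "geom_action H TH M d (\<lambda>h. \<alpha> (\<pi> h))"
    using geom_pullback[OF _ gH gG hom cont topG hausH prp cocpt] ga by blast
  moreover have "geom_action H TH N e (\<lambda>h. \<beta> (\<pi> h))"
    using geom_pullback[OF _ gH gG hom cont topG hausH prp cocpt] ga by blast
  moreover have "orbital_map H M d (\<lambda>h. \<alpha> (\<pi> h)) p N e (\<lambda>h. \<beta> (\<pi> h)) p' \<phi>"
    using orbital_pullback[OF om] hom by (auto simp: hom_def)
  ultimately show "rough_similarity M d N e \<phi>"
    using hyp p unfolding orbital_maps_rough_similar_def by blast
qed




lemma part1:
  fixes H :: "'h monoid" and TH :: "'h topology"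
  assumes lcg: "lc_group H TH"
    and hyp: "orbital_maps_rough_similar H TH TYPE('x) TYPE('y)"
    and K: "K \<subseteq> carrier H" "compactin TH K" "K \<lhd> H"
  shows "orbital_maps_rough_similar (H Mod K) (coset_topology H TH K) TYPE('x) TYPE('y)"
proof -
  have tg: "topological_group H TH" and haus: "Hausdorff_space TH" and lc: "locally_compact_space TH"
    using lcg unfolding lc_group_def by auto
  interpret normal K H by (rule K(3))
  have sub: "subgroup K H" by (rule normal_imp_subgroup[OF K(3)])
  have gM: "group (H Mod K)" by (rule factorgroup_is_group)
  have topG: "topspace (coset_topology H TH K) = carrier (H Mod K)"
    using topspace_coset_topology[OF tg sub] by (simp add: FactGroup_def)
  show ?thesis
  proof (rule reduce[OF hyp is_group gM r_coset_hom_Mod coset_proj_continuous[OF tg sub] topG haus])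
    fix Q assume Q: "compactin (coset_topology H TH K) Q"
    obtain D where D: "compactin TH D" "\<forall>h\<in>carrier H. K #>\<^bsub>H\<^esub> h \<in> Q \<longrightarrow> (\<exists>k\<in>K. \<exists>d\<in>D. h = k \<otimes>\<^bsub>H\<^esub> d)"
      using coset_compact_cover[OF tg lc sub Q] by blast
    define E where "E = (\<lambda>(x,y). x \<otimes>\<^bsub>H\<^esub> y) ` (K \<times> D)"
    have "compactin TH E" unfolding E_def by (rule tg_compact_mult[OF tg K(2) D(1)])
    moreover have "{h \<in> carrier H. K #>\<^bsub>H\<^esub> h \<in> Q} \<subseteq> E"
      using D(2) unfolding E_def by fastforce
    ultimately show "\<exists>E. compactin TH E \<and> {h \<in> carrier H. K #>\<^bsub>H\<^esub> h \<in> Q} \<subseteq> E" by blast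
  next
    have "compactin (coset_topology H TH K) {K}"
      using topG subgroup_in_rcosets[OF is_group] by (simp add: FactGroup_def)
    moreover have "\<exists>h\<in>carrier H. \<exists>dd\<in>{K}. g = (K #>\<^bsub>H\<^esub> h) \<otimes>\<^bsub>H Mod K\<^esub> dd"
      if g: "g \<in> carrier (H Mod K)" for g
    proof -
      obtain h where h: "h \<in> carrier H" "g = K #>\<^bsub>H\<^esub> h" using g by (auto simp: FactGroup_def RCOSETS_def)
      have "g = g \<otimes>\<^bsub>H Mod K\<^esub> \<one>\<^bsub>H Mod K\<^esub>" using monoid.r_one[OF group.is_monoid[OF gM] g] by simp
      then show ?thesis using h by auto
    qed
    ultimately show "\<exists>D. compactin (coset_topology H TH K) D \<and>
        (\<forall>g\<in>carrier (H Mod K). \<exists>h\<in>carrier H. \<exists>dd\<in>D. g = (K #>\<^bsub>H\<^esub> h) \<otimes>\<^bsub>H Mod K\<^esub> dd)"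
      by blast
  qed
qed




primrec powset :: "('h,'a) monoid_scheme \<Rightarrow> 'h set \<Rightarrow> nat \<Rightarrow> 'h set" where
  "powset H T0 0 = {\<one>\<^bsub>H\<^esub>}"
| "powset H T0 (Suc n) = (\<lambda>(x,y). x \<otimes>\<^bsub>H\<^esub> y) ` (powset H T0 n \<times> T0)"

lemma powset_carrier:
  assumes "group H" "T0 \<subseteq> carrier H"
  shows "powset H T0 n \<subseteq> carrier H"
  using assms by (induction n) (auto intro!: monoid.m_closed[OF group.is_monoid[OF assms(1)]] monoid.one_closed[OF group.is_monoid[OF assms(1)]])

lemma powset_mult:
  fixes H :: "('h,'a) monoid_scheme" (structure)
  assumes g: "group H" and T0: "T0 \<subseteq> carrier H"
  shows "x \<in> powset H T0 n \<Longrightarrow> y \<in> powset H T0 m \<Longrightarrow> x \<otimes> y \<in> powset H T0 (n+m)"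
proof (induction m arbitrary: y)
  case 0
  then show ?case using powset_carrier[OF g T0] group.is_monoid[OF g] monoid.r_one by fastforce
next
  case (Suc m)
  interpret group H by (rule g)
  obtain y' t where yt: "y' \<in> powset H T0 m" "t \<in> T0" "y = y' \<otimes> t" using Suc.prems(2) by auto
  have "x \<otimes> y' \<in> powset H T0 (n+m)" using Suc.IH[OF Suc.prems(1) yt(1)] .
  moreover have "x \<otimes> y = (x \<otimes> y') \<otimes> t"
  proof -
    have c: "x \<in> carrier H" "y' \<in> carrier H" "t \<in> carrier H"
      using yt powset_carrier[OF g T0] Suc.prems(1) T0 by blast+
    show ?thesis by (simp add: yt(3) m_assoc c)
  qed
  ultimately show ?case using yt(2) by force
qed

lemma powset_compact:
  assumes tg: "topological_group H T" and T0: "compactin T T0"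
  shows "compactin T (powset H T0 n)"
proof (induction n)
  case 0
  then show ?case using tg_top[OF tg] group.is_monoid[OF tg_group[OF tg]] monoid.one_closed by fastforce
next
  case (Suc n)
  then show ?case using tg_compact_mult[OF tg Suc T0] by simp
qed

lemma generate_powset:
  fixes H :: "('h,'a) monoid_scheme" (structure)
  assumes g: "group H" and S: "S \<subseteq> carrier H"
  defines "T0 \<equiv> S \<union> (\<lambda>x. inv x) ` S"
  shows "generate H S \<subseteq> (\<Union>n. powset H T0 n)"
proof
  interpret group H by (rule g)
  have T0c: "T0 \<subseteq> carrier H" using S unfolding T0_def by auto
  fix x assume "x \<in> generate H S"
  then show "x \<in> (\<Union>n. powset H T0 n)"
  proof induction
    case one
    then show ?case by (metis UN_I iso_tuple_UNIV_I powset.simps(1) singletonI)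
  next
    case (incl h)
    then have "\<one> \<otimes> h \<in> powset H T0 1" unfolding T0_def by force
    moreover have "\<one> \<otimes> h = h" using incl S by auto
    ultimately show ?case by (metis UN_I iso_tuple_UNIV_I)
  next
    case (inv h)
    then have "\<one> \<otimes> inv h \<in> powset H T0 1" unfolding T0_def by force
    moreover have "\<one> \<otimes> inv h = inv h" using inv S by auto
    ultimately show ?case by (metis UN_I iso_tuple_UNIV_I)
  next
    case (eng h1 h2)
    then show ?case using powset_mult[OF g T0c] by blast
  qed
qed




lemma baire_step:
  fixes H :: "('h,'a) monoid_scheme" and G :: "('g,'b) monoid_scheme"
  assumes tgH: "topological_group H TH" and cg: "compactly_generated H TH"
    and lcG: "lc_group G TG" and hom: "f \<in> hom H G" and cont: "continuous_map TH TG f"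
    and cl: "closedin TG (f ` carrier H)"
  shows "\<exists>P W p0. compactin TH P \<and> P \<subseteq> carrier H \<and> openin TG W \<and> p0 \<in> P \<and> f p0 \<in> W \<and>
            W \<inter> f ` carrier H \<subseteq> f ` P"
proof -
  have gH: "group H" using tg_group[OF tgH] .
  have tgG: "topological_group G TG" and hausG: "Hausdorff_space TG" and lcsG: "locally_compact_space TG"
    using lcG unfolding lc_group_def by auto
  obtain S where S: "S \<subseteq> carrier H" "compactin TH S" "generate H S = carrier H"
    using cg unfolding compactly_generated_def by blast
  define T0 where "T0 = S \<union> (\<lambda>x. inv\<^bsub>H\<^esub> x) ` S"
  have invc: "continuous_map TH TH (\<lambda>x. inv\<^bsub>H\<^esub> x)" using tgH unfolding topological_group_def by auto
  have T0c: "compactin TH T0" unfolding T0_def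
    by (intro compactin_Un S(2) image_compactin[OF S(2) invc])
  have T0sub: "T0 \<subseteq> carrier H" using S(1) gH unfolding T0_def by (auto intro: group.inv_closed)
  define P where "P n = powset H T0 n" for n
  have Pc: "compactin TH (P n)" for n unfolding P_def by (rule powset_compact[OF tgH T0c])
  have Psub: "P n \<subseteq> carrier H" for n unfolding P_def by (rule powset_carrier[OF gH T0sub])
  have cover: "carrier H = (\<Union>n. P n)"
  proof
    show "carrier H \<subseteq> (\<Union>n. P n)"
      using generate_powset[OF gH S(1)] S(3) unfolding P_def T0_def by simp
    show "(\<Union>n. P n) \<subseteq> carrier H" using Psub by (simp add: UN_least)
  qed
  define F where "F = f ` carrier H"
  define X where "X = subtopology TG F"
  have Fsub: "F \<subseteq> topspace TG"
    using continuous_map_image_subset_topspace[OF cont] tg_top[OF tgH] unfolding F_def by simp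
  have topX: "topspace X = F" unfolding X_def using Fsub by auto
  have fPc: "compactin X (f ` P n)" for n
  proof -
    have "f ` P n \<subseteq> F" unfolding F_def using Psub[of n] by (rule image_mono)
    then show ?thesis unfolding X_def compactin_subtopology
      using image_compactin[OF Pc cont] by simp
  qed
  have hausX: "Hausdorff_space X" unfolding X_def by (rule Hausdorff_space_subtopology[OF hausG])
  have lcX: "locally_compact_space X \<and> regular_space X"
  proof -
    have "locally_compact_space X" unfolding X_def F_def by (rule locally_compact_space_closed_subset[OF lcsG cl])
    then show ?thesis using hausX locally_compact_Hausdorff_or_regular by metis
  qed
  have "\<exists>n. X interior_of (f ` P n) \<noteq> {}"
  proof (rule ccontr)
    assume "\<not> (\<exists>n. X interior_of (f ` P n) \<noteq> {})"
    then have "X interior_of \<Union>(range (\<lambda>n. f ` P n)) = {}"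
    proof (intro Baire_category_alt)
      show "completely_metrizable_space X \<or> locally_compact_space X \<and> regular_space X" using lcX by simp
      show "countable (range (\<lambda>n. f ` P n))" by simp
      fix T assume "T \<in> range (\<lambda>n. f ` P n)"
      then obtain m where "T = f ` P m" by blast
      then show "closedin X T \<and> X interior_of T = {}"
        using compactin_imp_closedin[OF hausX fPc[of m]] \<open>\<not> (\<exists>n. X interior_of (f ` P n) \<noteq> {})\<close> by simp
    qed
    moreover have "\<Union>(range (\<lambda>n. f ` P n)) = topspace X"
    proof -
      have "\<Union>(range (\<lambda>n. f ` P n)) = f ` (\<Union>n. P n)" by (simp add: image_UN)
      then show ?thesis using topX cover unfolding F_def by simp
    qed
    moreover have "topspace X \<noteq> {}"
      using topX monoid.one_closed[OF group.is_monoid[OF gH]] unfolding F_def by auto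
    ultimately show False by simp
  qed
  then obtain n zz where o: "zz \<in> (X interior_of (f ` P n))" by blast
  have "openin (subtopology TG F) (X interior_of (f ` P n))"
    unfolding X_def[symmetric] by (rule openin_interior_of)
  then have "\<exists>W. openin TG W \<and> X interior_of (f ` P n) = W \<inter> F"
    by (rule openin_subtopology[THEN iffD1])
  then obtain W where W: "openin TG W" "X interior_of (f ` P n) = W \<inter> F" by blast
  have isub: "X interior_of (f ` P n) \<subseteq> f ` P n" by (rule interior_of_subset)
  obtain p0 where p0: "p0 \<in> P n" "zz = f p0" using o isub by blast
  have "W \<inter> f ` carrier H \<subseteq> f ` P n" using W(2) isub unfolding F_def by simp
  moreover have "f p0 \<in> W" using o W p0 by blast
  ultimately show ?thesis using Pc[of n] Psub[of n] W(1) p0(1) by (intro exI[of _ "P n"] exI[of _ W] exI[of _ p0]) simp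
qed




lemma baire_proper:
  fixes H :: "('h,'a) monoid_scheme" and G :: "('g,'b) monoid_scheme"
  assumes tgH: "topological_group H TH" and cg: "compactly_generated H TH"
    and lcG: "lc_group G TG" and hom: "f \<in> hom H G" and inj: "inj_on f (carrier H)"
    and cont: "continuous_map TH TG f"
    and cl: "closedin TG (f ` carrier H)" and Q: "compactin TG Q"
  shows "\<exists>E. compactin TH E \<and> {h \<in> carrier H. f h \<in> Q} \<subseteq> E"
proof -
  obtain P W p0 where PW: "compactin TH P" "P \<subseteq> carrier H" "openin TG W" "p0 \<in> P" "f p0 \<in> W"
      "W \<inter> f ` carrier H \<subseteq> f ` P"
    using baire_step[OF tgH cg lcG hom cont cl] by blast
  have gH: "group H" using tg_group[OF tgH] .
  have tgG: "topological_group G TG" using lcG unfolding lc_group_def by auto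
  have gG: "group G" using tg_group[OF tgG] .
  interpret fh: group_hom H G f
    using gH gG hom by (simp add: group_hom_def group_hom_axioms_def)
  define F where "F = f ` carrier H"
  have p0c: "p0 \<in> carrier H" using PW by blast
  have fp0c: "f p0 \<in> carrier G" using p0c by simp
  define V where "V y = (\<lambda>x. (y \<otimes>\<^bsub>G\<^esub> inv\<^bsub>G\<^esub> (f p0)) \<otimes>\<^bsub>G\<^esub> x) ` W" for y
  have QF: "compactin TG (F \<inter> Q)" unfolding F_def by (rule closed_Int_compactin[OF cl Q])
  have Fc: "F \<subseteq> carrier G" unfolding F_def by auto
  have opV: "\<forall>B\<in>V ` (F \<inter> Q). openin TG B"
    unfolding V_def using tg_lmult_open[OF tgG _ PW(3)] Fc fp0c by auto
  have covV: "F \<inter> Q \<subseteq> \<Union>(V ` (F \<inter> Q))"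
  proof
    fix y assume y: "y \<in> F \<inter> Q"
    then have yc: "y \<in> carrier G" using Fc by blast
    have "y = (y \<otimes>\<^bsub>G\<^esub> inv\<^bsub>G\<^esub> (f p0)) \<otimes>\<^bsub>G\<^esub> f p0"
      using yc fp0c by (simp add: fh.H.m_assoc)
    then have "y \<in> V y" unfolding V_def using PW(5) by blast
    then show "y \<in> \<Union>(V ` (F \<inter> Q))" using y by blast
  qed
  obtain \<F> where FF: "finite \<F>" "\<F> \<subseteq> V ` (F \<inter> Q)" "F \<inter> Q \<subseteq> \<Union>\<F>"
    using QF opV covV unfolding compactin_def by meson
  then obtain Y where Y: "Y \<subseteq> F \<inter> Q" "finite Y" "\<F> = V ` Y"
    by (meson finite_subset_image)
  define hy where "hy y = inv_into (carrier H) f y" for y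
  have hy: "hy y \<in> carrier H" "f (hy y) = y" if "y \<in> Y" for y
    using that Y unfolding hy_def F_def by (auto simp: inv_into_into f_inv_into_f)
  define a where "a y = hy y \<otimes>\<^bsub>H\<^esub> inv\<^bsub>H\<^esub> p0" for y
  have ac: "a y \<in> carrier H" if "y \<in> Y" for y unfolding a_def using hy[OF that] p0c by simp
  have fa: "f (a y) = y \<otimes>\<^bsub>G\<^esub> inv\<^bsub>G\<^esub> (f p0)" if "y \<in> Y" for y
    unfolding a_def using hy[OF that] p0c by simp
  define E where "E = (\<Union>y\<in>Y. (\<lambda>x. a y \<otimes>\<^bsub>H\<^esub> x) ` P)"
  have "compactin TH E" unfolding E_def
    using Y(2) tg_compact_lmult[OF tgH ac PW(1)] by (intro compactin_Union) auto
  moreover have "h \<in> E" if h: "h \<in> carrier H" "f h \<in> Q" for h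
  proof -
    have "f h \<in> F \<inter> Q" using h unfolding F_def by blast
    then obtain y where y: "y \<in> Y" "f h \<in> V y" using FF Y by blast
    then obtain w where w: "w \<in> W" "f h = f (a y) \<otimes>\<^bsub>G\<^esub> w" unfolding V_def using fa by auto
    have wc: "w \<in> carrier G" using w PW(3) openin_subset tg_top[OF tgG] by blast
    have "w = inv\<^bsub>G\<^esub> (f (a y)) \<otimes>\<^bsub>G\<^esub> f h"
      using fh.H.inv_solve_left[OF wc fh.hom_closed[OF ac[OF y(1)]] fh.hom_closed[OF h(1)]] w(2) by simp
    then have "w = f (inv\<^bsub>H\<^esub> (a y) \<otimes>\<^bsub>H\<^esub> h)" using ac[OF y(1)] h(1) by simp
    then have "w \<in> F" unfolding F_def using ac[OF y(1)] h(1) by blast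
    then obtain p where p: "p \<in> P" "w = f p" using PW(6) w(1) unfolding F_def by blast
    have pc: "p \<in> carrier H" using p PW(2) by blast
    have "f h = f (a y \<otimes>\<^bsub>H\<^esub> p)" using w(2) p ac[OF y(1)] pc by simp
    then have "h = a y \<otimes>\<^bsub>H\<^esub> p" using inj h(1) ac[OF y(1)] pc by (simp add: inj_on_def)
    then show "h \<in> E" unfolding E_def using y(1) p(1) by blast
  qed
  ultimately show ?thesis by blast
qed

lemma cocompact_image:
  fixes H :: "('h,'a) monoid_scheme" and G :: "('g,'b) monoid_scheme"
  assumes gH: "group H" and lcG: "lc_group G TG" and hom: "f \<in> hom H G"
    and cs: "compact_space (coset_topology G TG (f ` carrier H))"
  shows "\<exists>D. compactin TG D \<and> (\<forall>g\<in>carrier G. \<exists>h\<in>carrier H. \<exists>dd\<in>D. g = f h \<otimes>\<^bsub>G\<^esub> dd)"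
proof -
  have tgG: "topological_group G TG" and lc: "locally_compact_space TG"
    using lcG unfolding lc_group_def by auto
  have gG: "group G" using tg_group[OF tgG] .
  interpret fh: group_hom H G f
    using gH gG hom by (simp add: group_hom_def group_hom_axioms_def)
  have sub: "subgroup (f ` carrier H) G" by (rule fh.img_is_subgroup)
  have Q: "compactin (coset_topology G TG (f ` carrier H)) (rcosets\<^bsub>G\<^esub> (f ` carrier H))"
    using cs topspace_coset_topology[OF tgG sub] unfolding compact_space_def by simp
  obtain D where D: "compactin TG D"
    "\<forall>h\<in>carrier G. (f ` carrier H) #>\<^bsub>G\<^esub> h \<in> rcosets\<^bsub>G\<^esub> (f ` carrier H) \<longrightarrow>
        (\<exists>k\<in>f ` carrier H. \<exists>d\<in>D. h = k \<otimes>\<^bsub>G\<^esub> d)"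
    using coset_compact_cover[OF tgG lc sub Q] by blast
  have "\<exists>h\<in>carrier H. \<exists>dd\<in>D. g = f h \<otimes>\<^bsub>G\<^esub> dd" if g: "g \<in> carrier G" for g
  proof -
    have "(f ` carrier H) #>\<^bsub>G\<^esub> g \<in> rcosets\<^bsub>G\<^esub> (f ` carrier H)"
      using g fh.H.rcosetsI subgroup.subset[OF sub] by blast
    then show ?thesis using D(2) g by blast
  qed
  then show ?thesis using D(1) by blast
qed


theorem proposition6p1:
  fixes H :: "'h monoid" and TH :: "'h topology"
  assumes "lc_group H TH" and "compactly_generated H TH"
    and hyp: "orbital_maps_rough_similar H TH TYPE('x) TYPE('y)"
  shows "(\<forall>K. K \<subseteq> carrier H \<and> compactin TH K \<and> K \<lhd> H \<longrightarrow>
            orbital_maps_rough_similar (H Mod K) (coset_topology H TH K) TYPE('x) TYPE('y))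
       \<and> (\<forall>(G :: 'g monoid) TG f.
            lc_group G TG \<and> f \<in> hom H G \<and> inj_on f (carrier H) \<and> continuous_map TH TG f \<and>
            closedin TG (f ` carrier H) \<and> compact_space (coset_topology G TG (f ` carrier H)) \<longrightarrow>
            orbital_maps_rough_similar G TG TYPE('x) TYPE('y))"
proof -
  have tgH: "topological_group H TH" and haus: "Hausdorff_space TH"
    using assms(1) unfolding lc_group_def by auto
  have gH: "group H" using tg_group[OF tgH] .
  show ?thesis
  proof (intro conjI allI impI)
    fix K assume "K \<subseteq> carrier H \<and> compactin TH K \<and> K \<lhd> H"
    then show "orbital_maps_rough_similar (H Mod K) (coset_topology H TH K) TYPE('x) TYPE('y)"
      using part1[OF assms(1) hyp] by blast
  next
    fix G :: "'g monoid" and TG f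
    assume A: "lc_group G TG \<and> f \<in> hom H G \<and> inj_on f (carrier H) \<and> continuous_map TH TG f \<and>
            closedin TG (f ` carrier H) \<and> compact_space (coset_topology G TG (f ` carrier H))"
    have tgG: "topological_group G TG" using A unfolding lc_group_def by auto
    have gG: "group G" using tg_group[OF tgG] .
    show "orbital_maps_rough_similar G TG TYPE('x) TYPE('y)"
    proof (rule reduce[OF hyp gH gG _ _ tg_top[OF tgG] haus])
      show "f \<in> hom H G" "continuous_map TH TG f" using A by auto
      show "\<exists>E. compactin TH E \<and> {h \<in> carrier H. f h \<in> Q} \<subseteq> E" if "compactin TG Q" for Q
        using baire_proper[OF tgH assms(2) _ _ _ _ _ that] A by blast
      show "\<exists>D. compactin TG D \<and> (\<forall>g\<in>carrier G. \<exists>h\<in>carrier H. \<exists>dd\<in>D. g = f h \<otimes>\<^bsub>G\<^esub> dd)"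
        using cocompact_image[OF gH] A by blast
    qed
  qed
qed

end
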